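(* Let $n\geq3$ and let $S_n$ act on $V=\mathbb{C}^n$ by its natural permutation representation. The subspace of $(H^{2,1}\oplus H^{2,0})^{S_n}$ consisting of elements supported only on the identity is one-dimensional, with basis $\sum_{1\leq i<j\leq n}(e_i-e_j)\otimes e_i^*\wedge e_j^*\otimes 1$.
   Context: $S_n$ acts by $\sigma e_i=e_{\sigma(i)}$; $e_i^*$ is the dual basis. For $g\in S_n$, let $V^g$ be its fixed space, $(V^g)^\perp$ its orthogonal complement (standard bilinear form), $c_g=\operatorname{codim}V^g$; identify $(V^g)^*$ with functionals vanishing on $(V^g)^\perp$ and $((V^g)^* )^\perp$ with functionals vanishing on $V^g$. Set $H^{2,d}_g=S^d(V^g)\otimes\bigwedge^{2-c_g}(V^g)^*\otimes\bigwedge^{c_g}((V^g)^* )^\perp\otimes\mathbb{C}g\subseteq S^d(V)\otimes\bigwedge^2V^*\otimes\mathbb{C}g$ (zero if $2-c_g<0$), and $H^{2,d}=\bigoplus_gH^{2,d}_g$, with $S_n$ acting diagonally ($h\cdot(f\otimes\omega\otimes g)=hf\otimes h\omega\otimes hgh^{-1}$). An element is supported only on the identity if all its components for $g\neq1$ vanish. (Note $H^{2,d}_1=S^d(V)\otimes\bigwedge^2V^*\otimes\mathbb{C}1$.) *)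

theory Defs
  imports Complex_Main "HOL-Combinatorics.Permutations"
begin

text \<open>Model: V = C^n with standard basis e_0,...,e_{n-1}. Vectors and dual vectors are
  coefficient functions nat => complex vanishing outside {..<n}. A dual vector phi
  acts by phi(v) = sum_{a<n} phi a * v a (the standard bilinear form).
  Lambda^2 V^* is realised as antisymmetric bilinear forms (coefficient functions
  nat => nat => complex); an element of V (x) Lambda^2 V^* as nat => nat => nat => complex
  (first argument = vector index). S^0(V) = C and S^1(V) = V.
  Elements of the direct sums over g in S_n are functions on permutations.\<close>

definition vecs :: "nat \<Rightarrow> (nat \<Rightarrow> complex) set" where
  "vecs n = {v. \<forall>a. n \<le> a \<longrightarrow> v a = 0}"

definition bil :: "nat \<Rightarrow> (nat \<Rightarrow> complex) \<Rightarrow> (nat \<Rightarrow> complex) \<Rightarrow> complex" where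
  "bil n u v = (\<Sum>a<n. u a * v a)"

text \<open>fixed space V^g (g e_a = e_{g a}, so g v = v iff v (g a) = v a for all a)\<close>
definition fixed_space :: "nat \<Rightarrow> (nat \<Rightarrow> nat) \<Rightarrow> (nat \<Rightarrow> complex) set" where
  "fixed_space n g = {v \<in> vecs n. \<forall>a<n. v (g a) = v a}"

definition perp :: "nat \<Rightarrow> (nat \<Rightarrow> complex) set \<Rightarrow> (nat \<Rightarrow> complex) set" where
  "perp n W = {u \<in> vecs n. \<forall>w\<in>W. bil n u w = 0}"

definition ann :: "nat \<Rightarrow> (nat \<Rightarrow> complex) set \<Rightarrow> (nat \<Rightarrow> complex) set" where
  "ann n W = {phi \<in> vecs n. \<forall>w\<in>W. bil n phi w = 0}"

text \<open>(V^g)^* = functionals vanishing on (V^g)^perp; ((V^g)^*)^perp = functionals vanishing on V^g\<close>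
definition fixed_dual :: "nat \<Rightarrow> (nat \<Rightarrow> nat) \<Rightarrow> (nat \<Rightarrow> complex) set" where
  "fixed_dual n g = ann n (perp n (fixed_space n g))"

definition fixed_dual_perp :: "nat \<Rightarrow> (nat \<Rightarrow> nat) \<Rightarrow> (nat \<Rightarrow> complex) set" where
  "fixed_dual_perp n g = ann n (fixed_space n g)"

text \<open>c_g = codim V^g = n - (number of orbits of g on {..<n}) (dim V^g = number of orbits)\<close>
definition codim_fix :: "nat \<Rightarrow> (nat \<Rightarrow> nat) \<Rightarrow> nat" where
  "codim_fix n g = n - card ((\<lambda>a. {b. b < n \<and> (\<exists>k. (g ^^ k) a = b)}) ` {..<n})"

definition wedge :: "(nat \<Rightarrow> complex) \<Rightarrow> (nat \<Rightarrow> complex) \<Rightarrow> nat \<Rightarrow> nat \<Rightarrow> complex" where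
  "wedge phi psi = (\<lambda>a b. phi a * psi b - phi b * psi a)"

text \<open>generators phi \<and> psi of Lambda^{2-c}(V^g)^* (x) Lambda^c((V^g)^*)^perp (zero if c > 2)\<close>
definition wedge_gens :: "nat \<Rightarrow> (nat \<Rightarrow> nat) \<Rightarrow> (nat \<Rightarrow> nat \<Rightarrow> complex) set" where
  "wedge_gens n g = (let c = codim_fix n g in
     if c \<le> 2 then {wedge phi psi | phi psi.
        phi \<in> (if c = 2 then fixed_dual_perp n g else fixed_dual n g) \<and>
        psi \<in> (if c = 0 then fixed_dual n g else fixed_dual_perp n g)}
     else {})"

definition span2 :: "(nat \<Rightarrow> nat \<Rightarrow> complex) set \<Rightarrow> (nat \<Rightarrow> nat \<Rightarrow> complex) set" where
  "span2 G = {f. \<exists>m (c::nat \<Rightarrow> complex) t. (\<forall>i<m. t i \<in> G) \<and>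
                 f = (\<lambda>a b. \<Sum>i<m. c i * t i a b)}"

definition span3 :: "(nat \<Rightarrow> nat \<Rightarrow> nat \<Rightarrow> complex) set \<Rightarrow> (nat \<Rightarrow> nat \<Rightarrow> nat \<Rightarrow> complex) set" where
  "span3 G = {f. \<exists>m (c::nat \<Rightarrow> complex) t. (\<forall>i<m. t i \<in> G) \<and>
                 f = (\<lambda>k a b. \<Sum>i<m. c i * t i k a b)}"

text \<open>H^{2,0}_g = S^0(V^g) (x) ... = C (x) Lambda-part\<close>
definition H20g :: "nat \<Rightarrow> (nat \<Rightarrow> nat) \<Rightarrow> (nat \<Rightarrow> nat \<Rightarrow> complex) set" where
  "H20g n g = span2 (wedge_gens n g)"

text \<open>H^{2,1}_g = S^1(V^g) (x) ... = V^g (x) Lambda-part\<close>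
definition H21g :: "nat \<Rightarrow> (nat \<Rightarrow> nat) \<Rightarrow> (nat \<Rightarrow> nat \<Rightarrow> nat \<Rightarrow> complex) set" where
  "H21g n g = span3 {(\<lambda>k a b. p k * w a b) | p w. p \<in> fixed_space n g \<and> w \<in> wedge_gens n g}"

definition H20 :: "nat \<Rightarrow> ((nat \<Rightarrow> nat) \<Rightarrow> nat \<Rightarrow> nat \<Rightarrow> complex) set" where
  "H20 n = {x. \<forall>g. (g permutes {..<n} \<longrightarrow> x g \<in> H20g n g) \<and>
                   (\<not> g permutes {..<n} \<longrightarrow> x g = (\<lambda>a b. 0))}"

definition H21 :: "nat \<Rightarrow> ((nat \<Rightarrow> nat) \<Rightarrow> nat \<Rightarrow> nat \<Rightarrow> nat \<Rightarrow> complex) set" where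
  "H21 n = {x. \<forall>g. (g permutes {..<n} \<longrightarrow> x g \<in> H21g n g) \<and>
                   (\<not> g permutes {..<n} \<longrightarrow> x g = (\<lambda>k a b. 0))}"

text \<open>diagonal action: h e_k = e_{h k}, h e_a^* = e_{h a}^*, h g h^{-1} on the group part\<close>
definition invariant20 :: "nat \<Rightarrow> ((nat \<Rightarrow> nat) \<Rightarrow> nat \<Rightarrow> nat \<Rightarrow> complex) \<Rightarrow> bool" where
  "invariant20 n x = (\<forall>h g. h permutes {..<n} \<longrightarrow>
      x (h \<circ> g \<circ> inv h) = (\<lambda>a b. x g (inv h a) (inv h b)))"

definition invariant21 :: "nat \<Rightarrow> ((nat \<Rightarrow> nat) \<Rightarrow> nat \<Rightarrow> nat \<Rightarrow> nat \<Rightarrow> complex) \<Rightarrow> bool" where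
  "invariant21 n x = (\<forall>h g. h permutes {..<n} \<longrightarrow>
      x (h \<circ> g \<circ> inv h) = (\<lambda>k a b. x g (inv h k) (inv h a) (inv h b)))"

definition unitvec :: "nat \<Rightarrow> nat \<Rightarrow> complex" where
  "unitvec i = (\<lambda>a. if a = i then 1 else 0)"

definition basis_elem :: "nat \<Rightarrow> (nat \<Rightarrow> nat) \<Rightarrow> nat \<Rightarrow> nat \<Rightarrow> nat \<Rightarrow> complex" where
  "basis_elem n = (\<lambda>g k a b. if g = id then
      (\<Sum>(i, j) \<in> {(i, j). i < j \<and> j < n}.
          (unitvec i k - unitvec j k) * wedge (unitvec i) (unitvec j) a b)
    else 0)"

end

theory Submission
  imports Defs
begin

definition B :: "nat \<Rightarrow> nat \<Rightarrow> nat \<Rightarrow> nat \<Rightarrow> complex" where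
  "B n k a b = (if k<n \<and> a<n \<and> b<n \<and> a\<noteq>b then (if k=a then 1 else if k=b then -1 else 0) else 0)"

definition Spairs :: "nat \<Rightarrow> (nat\<times>nat) set" where
  "Spairs n = {(i, j). i < j \<and> j < n}"

lemma finite_Spairs: "finite (Spairs n)"
  by (rule finite_subset[of _ "{..<n} \<times> {..<n}"]) (auto simp: Spairs_def)

lemma summand: "p \<in> Spairs n \<Longrightarrow>
   (case p of (i,j) \<Rightarrow> (unitvec i k - unitvec j k) * wedge (unitvec i) (unitvec j) a b)
   = (if a \<noteq> b then (if p = (a,b) then (unitvec a k - unitvec b k) else 0)
        + (if p = (b,a) then (unitvec a k - unitvec b k) else 0) else 0)"
  by (cases p) (auto simp: Spairs_def unitvec_def wedge_def)

lemma basis_id: "basis_elem n id k a b = B n k a b"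
proof -
  have "basis_elem n id k a b = (\<Sum>p\<in>Spairs n. case p of (i,j) \<Rightarrow> (unitvec i k - unitvec j k) * wedge (unitvec i) (unitvec j) a b)"
    unfolding basis_elem_def Spairs_def by simp
  also have "\<dots> = (\<Sum>p\<in>Spairs n. (if a \<noteq> b then (if p = (a,b) then (unitvec a k - unitvec b k) else 0)
        + (if p = (b,a) then (unitvec a k - unitvec b k) else 0) else 0))"
    by (rule sum.cong) (auto simp: summand)
  also have "\<dots> = B n k a b"
  proof (cases "a = b")
    case True then show ?thesis by (simp add: B_def)
  next
    case False
    then show ?thesis
      by (simp add: sum.distrib finite_Spairs sum.delta) (auto simp: Spairs_def B_def unitvec_def)
  qed
  finally show ?thesis .
qed

lemma codim_id: "codim_fix n id = 0"
proof -
  have "(\<lambda>a. {b. b < n \<and> (\<exists>k. (id ^^ k) a = b)}) ` {..<n} = (\<lambda>a. {a}) ` {..<n}"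
    by (rule image_cong) auto
  moreover have "card ((\<lambda>a. {a}) ` {..<n}) = n"
    by (subst card_image) (auto simp: inj_on_def)
  ultimately show ?thesis unfolding codim_fix_def by simp
qed

lemma unitvec_vecs: "i < n \<Longrightarrow> unitvec i \<in> vecs n"
  by (auto simp: vecs_def unitvec_def)

lemma bil_unit: "i < n \<Longrightarrow> bil n u (unitvec i) = u i"
  by (simp add: bil_def unitvec_def if_distrib cong: if_cong)

lemma perp_id: "perp n (fixed_space n id) = {\<lambda>a. 0}"
proof -
  have "u = (\<lambda>a. 0)" if u: "u \<in> perp n (fixed_space n id)" for u
  proof
    fix a show "u a = 0"
    proof (cases "a < n")
      case True
      have "unitvec a \<in> fixed_space n id" using True by (simp add: fixed_space_def unitvec_vecs)
      then have "bil n u (unitvec a) = 0" using u by (auto simp: perp_def)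
      then show ?thesis using True bil_unit by simp
    next
      case False then show ?thesis using u by (auto simp: perp_def vecs_def)
    qed
  qed
  moreover have "(\<lambda>a. 0) \<in> perp n (fixed_space n id)"
    by (auto simp: perp_def vecs_def bil_def)
  ultimately show ?thesis by blast
qed

lemma unit_fixed_dual: "i < n \<Longrightarrow> unitvec i \<in> fixed_dual n id"
  by (auto simp: fixed_dual_def perp_id ann_def unitvec_vecs bil_def)

lemma wedge_unit_gen: "i < n \<Longrightarrow> j < n \<Longrightarrow> wedge (unitvec i) (unitvec j) \<in> wedge_gens n id"
  unfolding wedge_gens_def Let_def codim_id using unit_fixed_dual by auto

lemma basis_H21g: "(\<lambda>k a b. c * basis_elem n id k a b) \<in> H21g n id"
proof -
  obtain h where h: "bij_betw h {0..<card (Spairs n)} (Spairs n)"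
    using ex_bij_betw_nat_finite[OF finite_Spairs] by blast
  define t where "t = (\<lambda>p k a b. (case p of (i,j) \<Rightarrow> (unitvec i k - unitvec j k) * wedge (unitvec i) (unitvec j) a b))"
  have eq: "basis_elem n id k a b = (\<Sum>x<card (Spairs n). t (h x) k a b)" for k a b
  proof -
    have "basis_elem n id k a b = (\<Sum>p\<in>Spairs n. t p k a b)"
      unfolding basis_elem_def Spairs_def t_def by simp
    also have "\<dots> = (\<Sum>x\<in>{0..<card (Spairs n)}. t (h x) k a b)"
      by (rule sum.reindex_bij_betw[OF h, symmetric])
    finally show ?thesis by (simp add: atLeast0LessThan)
  qed
  have gen: "t (h x) \<in> {(\<lambda>k a b. p k * w a b) | p w. p \<in> fixed_space n id \<and> w \<in> wedge_gens n id}"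
    if "x < card (Spairs n)" for x
  proof -
    have "h x \<in> Spairs n" using bij_betwE[OF h] that by auto
    then obtain i j where ij: "h x = (i,j)" "i < j" "j < n"
      by (cases "h x") (auto simp: Spairs_def)
    have "(\<lambda>k. unitvec i k - unitvec j k) \<in> fixed_space n id"
      using ij by (auto simp: fixed_space_def vecs_def unitvec_def)
    moreover have "wedge (unitvec i) (unitvec j) \<in> wedge_gens n id"
      using ij by (intro wedge_unit_gen) auto
    ultimately show ?thesis unfolding t_def ij by auto
  qed
  show ?thesis unfolding H21g_def span3_def
    apply (rule CollectI)
    apply (rule exI[of _ "card (Spairs n)"], rule exI[of _ "\<lambda>_. c"], rule exI[of _ "\<lambda>x. t (h x)"])
    using gen by (auto simp: eq sum_distrib_left)
qed

lemma wedge_gens_vecs: "w \<in> wedge_gens n g \<Longrightarrow> \<exists>phi psi. phi \<in> vecs n \<and> psi \<in> vecs n \<and> w = wedge phi psi"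
  unfolding wedge_gens_def Let_def fixed_dual_def fixed_dual_perp_def
  by (auto simp: ann_def split: if_splits)

definition P3 :: "nat \<Rightarrow> (nat \<Rightarrow> nat \<Rightarrow> nat \<Rightarrow> complex) \<Rightarrow> bool" where
  "P3 n f = ((\<forall>k a b. (n \<le> k \<or> n \<le> a \<or> n \<le> b) \<longrightarrow> f k a b = 0) \<and> (\<forall>k a b. f k a b = - f k b a))"

definition P2 :: "nat \<Rightarrow> (nat \<Rightarrow> nat \<Rightarrow> complex) \<Rightarrow> bool" where
  "P2 n f = ((\<forall>a b. (n \<le> a \<or> n \<le> b) \<longrightarrow> f a b = 0) \<and> (\<forall>a b. f a b = - f b a))"

lemma P3I: "(\<And>k a b. (n \<le> k \<or> n \<le> a \<or> n \<le> b) \<Longrightarrow> f k a b = 0) \<Longrightarrow> (\<And>k a b. f k a b = - f k b a) \<Longrightarrow> P3 n f"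
  unfolding P3_def by blast
lemma P3_zero: "P3 n f \<Longrightarrow> (n \<le> k \<or> n \<le> a \<or> n \<le> b) \<Longrightarrow> f k a b = 0"
  unfolding P3_def by blast
lemma P3_anti: "P3 n f \<Longrightarrow> f k a b = - f k b a"
  unfolding P3_def by blast
lemma P2I: "(\<And>a b. (n \<le> a \<or> n \<le> b) \<Longrightarrow> f a b = 0) \<Longrightarrow> (\<And>a b. f a b = - f b a) \<Longrightarrow> P2 n f"
  unfolding P2_def by blast
lemma P2_zero: "P2 n f \<Longrightarrow> (n \<le> a \<or> n \<le> b) \<Longrightarrow> f a b = 0"
  unfolding P2_def by blast
lemma P2_anti: "P2 n f \<Longrightarrow> f a b = - f b a"
  unfolding P2_def by blast

lemma H21g_P3: "f \<in> H21g n g \<Longrightarrow> P3 n f"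
proof -
  assume "f \<in> H21g n g"
  then obtain m t c where t: "\<forall>i<(m::nat). t i \<in> {(\<lambda>k a b. p k * w a b) | p w. p \<in> fixed_space n g \<and> w \<in> wedge_gens n g}"
    and f: "f = (\<lambda>k a b. \<Sum>i<m. c i * t i k a b)"
    unfolding H21g_def span3_def mem_Collect_eq by blast
  have Pt: "P3 n (t i)" if im: "i < m" for i
  proof -
    obtain p w where pw: "t i = (\<lambda>k a b. p k * w a b)" "p \<in> fixed_space n g" "w \<in> wedge_gens n g"
      using t im by blast
    obtain phi psi where "phi \<in> vecs n" "psi \<in> vecs n" "w = wedge phi psi"
      using wedge_gens_vecs[OF pw(3)] by blast
    then show ?thesis using pw(1,2)
      by (intro P3I) (auto simp: fixed_space_def vecs_def wedge_def algebra_simps)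
  qed
  show "P3 n f" unfolding f
  proof (intro P3I)
    fix k a b assume "n \<le> k \<or> n \<le> a \<or> n \<le> b"
    then show "(\<Sum>i<m. c i * t i k a b) = 0"
      by (intro sum.neutral ballI) (simp add: P3_zero[OF Pt])
  next
    fix k a b
    have "(\<Sum>i<m. c i * t i k a b) = (\<Sum>i<m. - (c i * t i k b a))"
    proof (rule sum.cong)
      fix x assume "x \<in> {..<m}"
      then have "P3 n (t x)" using Pt by simp
      then show "c x * t x k a b = - (c x * t x k b a)" using P3_anti[of n "t x" k a b] by simp
    qed simp
    then show "(\<Sum>i<m. c i * t i k a b) = - (\<Sum>i<m. c i * t i k b a)"
      by (simp add: sum_negf)
  qed
qed

lemma H20g_P2: "f \<in> H20g n g \<Longrightarrow> P2 n f"
proof -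
  assume "f \<in> H20g n g"
  then obtain m t c where t: "\<forall>i<(m::nat). t i \<in> wedge_gens n g"
    and f: "f = (\<lambda>a b. \<Sum>i<m. c i * t i a b)"
    unfolding H20g_def span2_def mem_Collect_eq by blast
  have Pt: "P2 n (t i)" if im: "i < m" for i
  proof -
    obtain phi psi where "phi \<in> vecs n" "psi \<in> vecs n" "t i = wedge phi psi"
      using wedge_gens_vecs[of "t i" n g] t im by blast
    then show ?thesis
      by (intro P2I) (auto simp: vecs_def wedge_def)
  qed
  show "P2 n f" unfolding f
  proof (intro P2I)
    fix a b assume "n \<le> a \<or> n \<le> b"
    then show "(\<Sum>i<m. c i * t i a b) = 0"
      by (intro sum.neutral ballI) (simp add: P2_zero[OF Pt])
  next
    fix a b
    have "(\<Sum>i<m. c i * t i a b) = (\<Sum>i<m. - (c i * t i b a))"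
    proof (rule sum.cong)
      fix x assume "x \<in> {..<m}"
      then have "P2 n (t x)" using Pt by simp
      then show "c x * t x a b = - (c x * t x b a)" using P2_anti[of n "t x" a b] by simp
    qed simp
    then show "(\<Sum>i<m. c i * t i a b) = - (\<Sum>i<m. c i * t i b a)"
      by (simp add: sum_negf)
  qed
qed

lemma conj_id: "h permutes S \<Longrightarrow> (h \<circ> g \<circ> inv h = id) \<longleftrightarrow> g = id"
proof
  assume h: "h permutes S" and e: "h \<circ> g \<circ> inv h = id"
  have "g = inv h \<circ> (h \<circ> g \<circ> inv h) \<circ> h"
    by (rule ext) (simp add: permutes_inverses[OF h])
  then show "g = id" using e permutes_inv_o[OF h] by simp
next
  assume h: "h permutes S" and "g = id"
  then show "h \<circ> g \<circ> inv h = id" using permutes_inv_o[OF h] by simp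
qed

lemma B_inv: "h permutes {..<n} \<Longrightarrow> B n (inv h k) (inv h a) (inv h b) = B n k a b"
proof -
  assume h: "h permutes {..<n}"
  then have hi: "inv h permutes {..<n}" by (rule permutes_inv)
  have lt: "inv h x < n \<longleftrightarrow> x < n" for x using permutes_in_image[OF hi, of x] by simp
  have eq: "inv h x = inv h y \<longleftrightarrow> x = y" for x y using permutes_inj[OF hi] by (auto simp: inj_def)
  show ?thesis unfolding B_def lt eq by simp
qed

lemma x0_zero:
  assumes P: "P2 n w" and inv: "\<And>a b x y. x < n \<Longrightarrow> y < n \<Longrightarrow> w a b = w (transpose x y a) (transpose x y b)"
  shows "w a b = 0"
proof (cases "a < n \<and> b < n")
  case True
  have "w a b = w b a" using inv[of a b a b] True by simp
  moreover have "w a b = - w b a" using P by (rule P2_anti)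
  ultimately show ?thesis by simp
next
  case False then show ?thesis using P P2_zero by auto
qed

lemma x1_form:
  assumes n: "n \<ge> 3" and P: "P3 n f"
    and inv: "\<And>k a b x y. x < n \<Longrightarrow> y < n \<Longrightarrow> f k a b = f (transpose x y k) (transpose x y a) (transpose x y b)"
  shows "f k a b = f 0 0 1 * B n k a b"
proof -
  have anti: "f k a b = - f k b a" for k a b using P by (rule P3_anti)
  have m1: "f x x y = f x' x' y" if "x < n" "x' < n" "y \<noteq> x" "y \<noteq> x'" for x x' y
    using inv[of x x' x x y] that by simp
  have m2: "f x x y = f x x y'" if "y < n" "y' < n" "y \<noteq> x" "y' \<noteq> x" for x y y'
    using inv[of y y' x x y] that by simp
  have g: "f a a b = f 0 0 1" if "a < n" "b < n" "a \<noteq> b" for a b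
  proof (cases "b = 0")
    case False
    then show ?thesis using m1[of a 0 b] m2[of b 1 0] that n by simp
  next
    case True
    then show ?thesis using m1[of a 2 0] m2[of 0 1 2] m1[of 2 0 1] that n by simp
  qed
  show ?thesis
  proof (cases "k < n \<and> a < n \<and> b < n")
    case False then show ?thesis using P3_zero[OF P, of k a b] by (auto simp: B_def)
  next
    case True
    show ?thesis
    proof (cases "a = b")
      case True
      have "f k a a = - f k a a" by (rule anti)
      then have "f k a a = 0" by simp
      then show ?thesis using True by (simp add: B_def)
    next
      case ab: False
      consider "k = a" | "k = b" | "k \<noteq> a \<and> k \<noteq> b" by blast
      then show ?thesis
      proof cases
        case 1 then show ?thesis using g[of a b] True ab by (simp add: B_def)
      next
        case 2
        have "f b a b = - f b b a" by (rule anti)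
        then show ?thesis using g[of b a] True ab 2 by (simp add: B_def)
      next
        case 3
        have "f k a b = f k b a" using inv[of a b k a b] True 3 by simp
        moreover have "f k a b = - f k b a" by (rule anti)
        ultimately have "f k a b = 0" by simp
        then show ?thesis using True 3 ab by (simp add: B_def)
      qed
    qed
  qed
qed

lemma zero_H21g: "(\<lambda>k a b. 0) \<in> H21g n g"
  unfolding H21g_def span3_def by (rule CollectI, rule exI[of _ 0]) simp

lemma zero_H20g: "(\<lambda>a b. 0) \<in> H20g n g"
  unfolding H20g_def span2_def by (rule CollectI, rule exI[of _ 0]) simp

lemma basis_nonid: "g \<noteq> id \<Longrightarrow> basis_elem n g = (\<lambda>k a b. 0)"
  unfolding basis_elem_def by (rule ext) simp

lemma tconj: "transpose x y \<circ> id \<circ> transpose x y = id"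
  by simp

theorem lemma4p4:
  fixes n :: nat
  assumes "n \<ge> 3"
  shows "{(x1, x0). x1 \<in> H21 n \<and> x0 \<in> H20 n \<and> invariant21 n x1 \<and> invariant20 n x0 \<and>
            (\<forall>g. g \<noteq> id \<longrightarrow> x1 g = (\<lambda>k a b. 0) \<and> x0 g = (\<lambda>a b. 0))}
         = {((\<lambda>g k a b. c * basis_elem n g k a b), (\<lambda>g a b. 0)) | c. True}
       \<and> basis_elem n \<noteq> (\<lambda>g k a b. 0)"
proof
  have idp: "id permutes {..<n}" by (rule permutes_id)
  show "basis_elem n \<noteq> (\<lambda>g k a b. 0)"
  proof
    assume "basis_elem n = (\<lambda>g k a b. 0)"
    then have "basis_elem n id 0 0 1 = 0" by simp
    then show False using assms by (simp add: basis_id B_def)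
  qed
  show "{(x1, x0). x1 \<in> H21 n \<and> x0 \<in> H20 n \<and> invariant21 n x1 \<and> invariant20 n x0 \<and>
            (\<forall>g. g \<noteq> id \<longrightarrow> x1 g = (\<lambda>k a b. 0) \<and> x0 g = (\<lambda>a b. 0))}
         = {((\<lambda>g k a b. c * basis_elem n g k a b), (\<lambda>g a b. 0)) | c. True}"
  proof (rule set_eqI, rule iffI)
    fix z assume "z \<in> {(x1, x0). x1 \<in> H21 n \<and> x0 \<in> H20 n \<and> invariant21 n x1 \<and> invariant20 n x0 \<and>
            (\<forall>g. g \<noteq> id \<longrightarrow> x1 g = (\<lambda>k a b. 0) \<and> x0 g = (\<lambda>a b. 0))}"
    then obtain x1 x0 where z: "z = (x1, x0)" and h1: "x1 \<in> H21 n" and h0: "x0 \<in> H20 n"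
      and i1: "invariant21 n x1" and i0: "invariant20 n x0"
      and sup: "\<forall>g. g \<noteq> id \<longrightarrow> x1 g = (\<lambda>k a b. 0) \<and> x0 g = (\<lambda>a b. 0)" by blast
    have P3: "P3 n (x1 id)" using h1 idp unfolding H21_def by (blast intro: H21g_P3)
    have P2: "P2 n (x0 id)" using h0 idp unfolding H20_def by (blast intro: H20g_P2)
    have inv1: "x1 id k a b = x1 id (transpose x y k) (transpose x y a) (transpose x y b)"
      if "x < n" "y < n" for k a b x y
    proof -
      have "transpose x y permutes {..<n}" using that by (intro permutes_swap_id) auto
      then have "x1 (transpose x y \<circ> id \<circ> inv (transpose x y)) = (\<lambda>k a b. x1 id (inv (transpose x y) k) (inv (transpose x y) a) (inv (transpose x y) b))"
        using i1 unfolding invariant21_def by blast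
      then have "x1 id = (\<lambda>k a b. x1 id (transpose x y k) (transpose x y a) (transpose x y b))"
        by (simp only: inv_transpose_eq tconj)
      then show ?thesis by (simp add: fun_eq_iff)
    qed
    have inv0: "x0 id a b = x0 id (transpose x y a) (transpose x y b)"
      if "x < n" "y < n" for a b x y
    proof -
      have "transpose x y permutes {..<n}" using that by (intro permutes_swap_id) auto
      then have "x0 (transpose x y \<circ> id \<circ> inv (transpose x y)) = (\<lambda>a b. x0 id (inv (transpose x y) a) (inv (transpose x y) b))"
        using i0 unfolding invariant20_def by blast
      then have "x0 id = (\<lambda>a b. x0 id (transpose x y a) (transpose x y b))"
        by (simp only: inv_transpose_eq tconj)
      then show ?thesis by (simp add: fun_eq_iff)
    qed
    have e1: "x1 = (\<lambda>g k a b. x1 id 0 0 1 * basis_elem n g k a b)"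
    proof (rule ext)
      fix g show "x1 g = (\<lambda>k a b. x1 id 0 0 1 * basis_elem n g k a b)"
      proof (cases "g = id")
        case True
        show ?thesis unfolding True basis_id
          by (rule ext)+ (rule x1_form[OF assms P3 inv1])
      next
        case False then show ?thesis using sup basis_nonid[OF False] by simp
      qed
    qed
    have e0: "x0 = (\<lambda>g a b. 0)"
    proof (rule ext)
      fix g show "x0 g = (\<lambda>a b. 0)"
      proof (cases "g = id")
        case True
        show ?thesis unfolding True
          by (rule ext)+ (rule x0_zero[OF P2 inv0])
      next
        case False then show ?thesis using sup by simp
      qed
    qed
    show "z \<in> {((\<lambda>g k a b. c * basis_elem n g k a b), (\<lambda>g a b. 0)) | c. True}"
      unfolding z using e1 e0 by blast
  next
    fix z :: "((nat \<Rightarrow> nat) \<Rightarrow> nat \<Rightarrow> nat \<Rightarrow> nat \<Rightarrow> complex) \<times> ((nat \<Rightarrow> nat) \<Rightarrow> nat \<Rightarrow> nat \<Rightarrow> complex)"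
    assume "z \<in> {((\<lambda>g k a b. c * basis_elem n g k a b), (\<lambda>g a b. 0)) | c. True}"
    then obtain c where z: "z = ((\<lambda>g k a b. c * basis_elem n g k a b), (\<lambda>g a b. 0))" by blast
    define x1 where "x1 = (\<lambda>g k a b. c * basis_elem n g k a b)"
    have x1g: "x1 g = (\<lambda>k a b. 0)" if "g \<noteq> id" for g
      using basis_nonid[OF that] by (simp add: x1_def)
    have "x1 \<in> H21 n"
      unfolding H21_def
    proof (intro CollectI allI conjI impI)
      fix g assume "g permutes {..<n}"
      show "x1 g \<in> H21g n g"
      proof (cases "g = id")
        case True then show ?thesis using basis_H21g by (simp add: x1_def)
      next
        case False then show ?thesis using x1g zero_H21g by simp
      qed
    next
      fix g assume "\<not> g permutes {..<n}"
      then have "g \<noteq> id" using idp by auto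
      then show "x1 g = (\<lambda>k a b. 0)" by (rule x1g)
    qed
    moreover have "invariant21 n x1"
      unfolding invariant21_def
    proof (intro allI impI)
      fix h g assume h: "h permutes {..<n}"
      show "x1 (h \<circ> g \<circ> inv h) = (\<lambda>k a b. x1 g (inv h k) (inv h a) (inv h b))"
      proof (cases "g = id")
        case True
        then have "h \<circ> g \<circ> inv h = id" using conj_id[OF h, of g] by blast
        then show ?thesis using True by (simp add: x1_def basis_id B_inv[OF h])
      next
        case False
        then have "h \<circ> g \<circ> inv h \<noteq> id" using conj_id[OF h] by simp
        then show ?thesis using False x1g by simp
      qed
    qed
    moreover have "(\<lambda>g a b. 0) \<in> H20 n" unfolding H20_def using zero_H20g by simp
    moreover have "invariant20 n (\<lambda>g a b. 0)" unfolding invariant20_def by simp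
    ultimately show "z \<in> {(x1, x0). x1 \<in> H21 n \<and> x0 \<in> H20 n \<and> invariant21 n x1 \<and> invariant20 n x0 \<and>
            (\<forall>g. g \<noteq> id \<longrightarrow> x1 g = (\<lambda>k a b. 0) \<and> x0 g = (\<lambda>a b. 0))}"
      unfolding z x1_def[symmetric] using x1g by simp
  qed
qed

end
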